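(* Let $(X_t)_{t\in\mathbb N_0}$ be real random variables adapted to a filtration $(\mathcal F_t)_{t\in\mathbb N_0}$ with $X_0=x_0$ deterministic, let $\tau^*$ be a stopping time, let $I^-<I^+$ be reals, and define $\tau^+=\inf\{t\ge0:X_t\ge I^+\}$, $\tau^-=\inf\{t\ge0:X_t\le I^-\}$. For a stopping time $\tau$ and parameters $D,s\ge0$, $R\in\mathbb R$, say that the drift conditions hold if for every $t\ge1$: (C1) $\mathbf 1_{\{\tau>t-1\}}\big(X_{t-1}+R-\mathbb E[X_t\mid\mathcal F_{t-1}]\big)\le0$ almost surely, and (C2) conditioned on $\mathcal F_{t-1}$, the random variable $\mathbf 1_{\{\tau>t-1\}}(X_{t-1}+R-X_t)$ satisfies the one-sided $(D,s)$-Bernstein condition. Let $\epsilon>0$. (1) Suppose the drift conditions hold with $R<0$ and $\tau=\tau^*$, and $x_0>I^-$. Then for every positive integer $T\le\frac{(1-\epsilon)(x_0-I^-)}{-R}$, $$\Pr[\tau^-\le\min\{T,\tau^*\}]\le\exp\Big(-\frac{\epsilon^2(x_0-I^-)^2/2}{sT+\epsilon(x_0-I^-)D/3}\Big).$$ (2) Suppose the drift conditions hold with $R>0$ and $\tau=\min\{\tau^+,\tau^-,\tau^*\}$, and $I^-<x_0<I^+$. Then for every positive integer $T\ge\frac{(1+\epsilon)(I^+-x_0)}{R}$, both $\Pr[\tau^+>T\text{ and }\tau^*>T]$ and $\Pr[\tau^+>\tau^-\text{ and }\tau^*>T]$ are at most $$\exp\Big(-\frac{(x_0-I^-)^2/2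}{sT+(x_0-I^-)D/3}\Big)+\exp\Big(-\frac{\epsilon^2(I^+-x_0)^2/2}{sT+\epsilon(I^+-x_0)D/3}\Big).$$
   Context: One-sided Bernstein condition: for $D,s\ge0$, a random variable $Z$ satisfies the one-sided $(D,s)$-Bernstein condition if $\mathbb E[e^{\lambda Z}]\le\exp\!\big(\frac{\lambda^2 s/2}{1-\lambda D/3}\big)$ for all $\lambda\ge0$ with $\lambda D<3$; "conditioned on $\mathcal F_{t-1}$" means this holds almost surely with $\mathbb E[\,\cdot\mid\mathcal F_{t-1}]$ in place of $\mathbb E$. Infima of empty sets are $+\infty$. *)

theory Defs
  imports "HOL-Probability.Probability" "HOL-Library.Extended_Nat"
begin

definition nat_stopping_time :: "(nat \<Rightarrow> 'a measure) \<Rightarrow> ('a \<Rightarrow> enat) \<Rightarrow> bool" where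
  "nat_stopping_time F \<tau> \<longleftrightarrow> (\<forall>t::nat. Measurable.pred (F t) (\<lambda>\<omega>. \<tau> \<omega> \<le> enat t))"

text \<open>First time the process is at least I (infimum of the empty set is infinity).\<close>
definition hit_up :: "(nat \<Rightarrow> 'a \<Rightarrow> real) \<Rightarrow> real \<Rightarrow> 'a \<Rightarrow> enat" where
  "hit_up X I \<omega> = (INF t \<in> {t. X t \<omega> \<ge> I}. enat t)"

text \<open>First time the process is at most I (infimum of the empty set is infinity).\<close>
definition hit_down :: "(nat \<Rightarrow> 'a \<Rightarrow> real) \<Rightarrow> real \<Rightarrow> 'a \<Rightarrow> enat" where
  "hit_down X I \<omega> = (INF t \<in> {t. X t \<omega> \<le> I}. enat t)"

definition cond_bernstein :: "'a measure \<Rightarrow> 'a measure \<Rightarrow> ('a \<Rightarrow> real) \<Rightarrow> real \<Rightarrow> real \<Rightarrow> bool" where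
  "cond_bernstein M G Z D s \<longleftrightarrow>
     (\<forall>l::real. l \<ge> 0 \<and> l * D < 3 \<longrightarrow>
        (AE \<omega> in M. nn_cond_exp M G (\<lambda>x. ennreal (exp (l * Z x))) \<omega>
                      \<le> ennreal (exp ((l\<^sup>2 * s / 2) / (1 - l * D / 3)))))"

text \<open>Drift conditions (C1), (C2), for every t \<ge> 1, written with t = Suc t'.\<close>
definition drift_conditions ::
  "'a measure \<Rightarrow> (nat \<Rightarrow> 'a measure) \<Rightarrow> (nat \<Rightarrow> 'a \<Rightarrow> real) \<Rightarrow> ('a \<Rightarrow> enat)
     \<Rightarrow> real \<Rightarrow> real \<Rightarrow> real \<Rightarrow> bool" where
  "drift_conditions M F X \<tau> R D s \<longleftrightarrow>
     (\<forall>t::nat.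
        (AE \<omega> in M. indicator {x. \<tau> x > enat t} \<omega>
                       * (X t \<omega> + R - real_cond_exp M (F t) (X (Suc t)) \<omega>) \<le> (0::real))
      \<and> cond_bernstein M (F t)
          (\<lambda>\<omega>. indicator {x. \<tau> x > enat t} \<omega> * (X t \<omega> + R - X (Suc t) \<omega>)) D s)"

end

theory Submission
  imports Defs
begin

lemma sfs:
  assumes M: "prob_space M" and sub: "subalgebra M G"
  shows "sigma_finite_subalgebra M G"
proof -
  interpret prob_space M by fact
  have "finite_measure_subalgebra M G"
    by unfold_locales (use sub in auto)
  then show ?thesis by (rule finite_measure_subalgebra_is_sigma_finite)
qed

lemma moment_bound:
  fixes Z :: "nat \<Rightarrow> 'a \<Rightarrow> real"
  assumes M: "prob_space M" and filt: "filtration (space M) F" and sub: "\<And>t. subalgebra M (F t)"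
  and Zmeas: "\<And>t. Z t \<in> borel_measurable (F (Suc t))"
  and Gmeas: "\<And>t. G t \<in> sets (F t)"
  and bern: "\<And>t. AE \<omega> in M. nn_cond_exp M (F t) (\<lambda>x. ennreal (exp (l * Z t x))) \<omega> \<le> ennreal (exp psi)"
  and psi: "psi \<ge> 0"
  shows "(\<integral>\<^sup>+\<omega>. ennreal (exp (l * (\<Sum>i<n. indicator (G i) \<omega> * Z i \<omega>))) \<partial>M) \<le> ennreal (exp (real n * psi))"
proof (induction n)
  case 0
  interpret prob_space M by fact
  show ?case by (simp add: emeasure_space_1)
next
  case (Suc n)
  interpret prob_space M by fact
  interpret sf: sigma_finite_subalgebra M "F n" using sfs[OF M sub] .
  have subFF: "subalgebra (F j) (F i)" if "i \<le> j" for i j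
    using filt that unfolding subalgebra_def filtration_def by auto
  have Zn: "Z i \<in> borel_measurable (F n)" if "i < n" for i
    using measurable_from_subalg[OF subFF Zmeas] that by auto
  have Gn: "G i \<in> sets (F n)" if "i < n" for i
    using subFF[of i n] Gmeas[of i] that unfolding subalgebra_def by auto
  define S where "S \<omega> = (\<Sum>i<n. indicator (G i) \<omega> * Z i \<omega>)" for \<omega>
  define E where "E \<omega> = ennreal (exp (l * S \<omega>))" for \<omega>
  have Smeas: "S \<in> borel_measurable (F n)"
    unfolding S_def
    by (intro borel_measurable_sum borel_measurable_times borel_measurable_indicator Zn Gn) auto
  have Emeas[measurable]: "E \<in> borel_measurable (F n)"
    unfolding E_def using Smeas by measurable
  have GnM[measurable]: "G n \<in> sets (F n)" by (rule Gmeas)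
  have ZM[measurable]: "Z n \<in> borel_measurable M"
    using measurable_from_subalg[OF sub Zmeas] .
  define f1 where "f1 \<omega> = E \<omega> * indicator (G n) \<omega>" for \<omega>
  define f2 where "f2 \<omega> = E \<omega> * indicator (space M - G n) \<omega>" for \<omega>
  define g where "g \<omega> = ennreal (exp (l * Z n \<omega>))" for \<omega>
  have f1m[measurable]: "f1 \<in> borel_measurable (F n)" unfolding f1_def by measurable
  have spF: "space (F n) = space M" using sub[of n] unfolding subalgebra_def by auto
  have f2m[measurable]: "f2 \<in> borel_measurable (F n)" unfolding f2_def
    using GnM spF by (intro borel_measurable_times_ennreal Emeas borel_measurable_indicator) (metis sets.compl_sets)
  have f1M[measurable]: "f1 \<in> borel_measurable M" using measurable_from_subalg[OF sub f1m] .
  have f2M[measurable]: "f2 \<in> borel_measurable M" using measurable_from_subalg[OF sub f2m] .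
  have EM[measurable]: "E \<in> borel_measurable M" using measurable_from_subalg[OF sub Emeas] .
  have gM[measurable]: "g \<in> borel_measurable M" unfolding g_def by measurable
  have "(\<integral>\<^sup>+\<omega>. ennreal (exp (l * (\<Sum>i<Suc n. indicator (G i) \<omega> * Z i \<omega>))) \<partial>M)
      = (\<integral>\<^sup>+\<omega>. f1 \<omega> * g \<omega> + f2 \<omega> \<partial>M)"
  proof (rule nn_integral_cong)
    fix \<omega> assume "\<omega> \<in> space M"
    then show "ennreal (exp (l * (\<Sum>i<Suc n. indicator (G i) \<omega> * Z i \<omega>))) = f1 \<omega> * g \<omega> + f2 \<omega>"
      unfolding f1_def f2_def g_def E_def S_def
      by (cases "\<omega> \<in> G n") (auto simp: distrib_left exp_add ennreal_mult'' split: split_indicator)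
  qed
  also have "\<dots> = (\<integral>\<^sup>+\<omega>. f1 \<omega> * g \<omega> \<partial>M) + (\<integral>\<^sup>+\<omega>. f2 \<omega> \<partial>M)"
    by (rule nn_integral_add) auto
  also have "(\<integral>\<^sup>+\<omega>. f1 \<omega> * g \<omega> \<partial>M) = (\<integral>\<^sup>+\<omega>. f1 \<omega> * nn_cond_exp M (F n) g \<omega> \<partial>M)"
    by (rule sf.nn_cond_exp_intg[symmetric]) auto
  also have "\<dots> + (\<integral>\<^sup>+\<omega>. f2 \<omega> \<partial>M) = (\<integral>\<^sup>+\<omega>. f1 \<omega> * nn_cond_exp M (F n) g \<omega> + f2 \<omega> \<partial>M)"
    by (rule nn_integral_add[symmetric]) auto
  also have "\<dots> \<le> (\<integral>\<^sup>+\<omega>. ennreal (exp psi) * E \<omega> \<partial>M)"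
  proof (rule nn_integral_mono_AE)
    show "AE \<omega> in M. f1 \<omega> * nn_cond_exp M (F n) g \<omega> + f2 \<omega> \<le> ennreal (exp psi) * E \<omega>"
      using bern[of n]
    proof eventually_elim
      case (elim \<omega>)
      have "1 \<le> ennreal (exp psi)" using psi by simp
      then show ?case
      proof (cases "\<omega> \<in> G n")
        case True
        then show ?thesis using elim unfolding f1_def f2_def g_def
          by (auto simp: mult.commute intro: mult_left_mono)
      next
        case False
        have "E \<omega> * indicator (space M - G n) \<omega> \<le> E \<omega> * 1"
          by (intro mult_left_mono) (auto split: split_indicator)
        also have "\<dots> \<le> E \<omega> * ennreal (exp psi)"
          using \<open>1 \<le> ennreal (exp psi)\<close> by (intro mult_left_mono) auto
        finally show ?thesis using False unfolding f1_def f2_def g_def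
          by (auto simp: mult.commute)
      qed
    qed
  qed
  also have "\<dots> = ennreal (exp psi) * (\<integral>\<^sup>+\<omega>. E \<omega> \<partial>M)"
    by (rule nn_integral_cmult) auto
  also have "\<dots> \<le> ennreal (exp psi) * ennreal (exp (real n * psi))"
    using Suc.IH unfolding E_def S_def by (intro mult_left_mono) auto
  also have "\<dots> = ennreal (exp (real (Suc n) * psi))"
    by (simp add: ennreal_mult''[symmetric] exp_add[symmetric] algebra_simps)
  finally show ?case .
qed

lemma hit_down_le_iff: "hit_down X I \<omega> \<le> enat k \<longleftrightarrow> (\<exists>j\<le>k. X j \<omega> \<le> I)"
proof
  assume "\<exists>j\<le>k. X j \<omega> \<le> I"
  then obtain j where "j \<le> k" "X j \<omega> \<le> I" by auto
  then have "hit_down X I \<omega> \<le> enat j" unfolding hit_down_def by (intro INF_lower2[of j]) auto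
  then show "hit_down X I \<omega> \<le> enat k" using \<open>j \<le> k\<close> order_trans by fastforce
next
  assume h: "hit_down X I \<omega> \<le> enat k"
  show "\<exists>j\<le>k. X j \<omega> \<le> I"
  proof (rule ccontr)
    assume "\<not> ?thesis"
    then have "enat (Suc k) \<le> hit_down X I \<omega>" unfolding hit_down_def
      by (intro INF_greatest) (force simp: not_le Suc_le_eq)
    with h show False by (metis Suc_n_not_le_n enat_ord_simps(1) order_trans)
  qed
qed

lemma hit_up_le_iff: "hit_up X I \<omega> \<le> enat k \<longleftrightarrow> (\<exists>j\<le>k. X j \<omega> \<ge> I)"
proof
  assume "\<exists>j\<le>k. X j \<omega> \<ge> I"
  then obtain j where "j \<le> k" "X j \<omega> \<ge> I" by auto
  then have "hit_up X I \<omega> \<le> enat j" unfolding hit_up_def by (intro INF_lower2[of j]) auto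
  then show "hit_up X I \<omega> \<le> enat k" using \<open>j \<le> k\<close> order_trans by fastforce
next
  assume h: "hit_up X I \<omega> \<le> enat k"
  show "\<exists>j\<le>k. X j \<omega> \<ge> I"
  proof (rule ccontr)
    assume "\<not> ?thesis"
    then have "enat (Suc k) \<le> hit_up X I \<omega>" unfolding hit_up_def
      by (intro INF_greatest) (force simp: not_le Suc_le_eq)
    with h show False by (metis Suc_n_not_le_n enat_ord_simps(1) order_trans)
  qed
qed

lemma hit_down_less_iff: "enat k < hit_down X I \<omega> \<longleftrightarrow> (\<forall>j\<le>k. X j \<omega> > I)"
  using hit_down_le_iff[of X I \<omega> k] by (auto simp: not_le)

lemma hit_up_less_iff: "enat k < hit_up X I \<omega> \<longleftrightarrow> (\<forall>j\<le>k. X j \<omega> < I)"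
  using hit_up_le_iff[of X I \<omega> k] by (auto simp: not_le)

lemma hit_down_eq: "hit_down X I \<omega> = enat k \<Longrightarrow> X k \<omega> \<le> I"
proof -
  assume h: "hit_down X I \<omega> = enat k"
  then obtain j where j: "j \<le> k" "X j \<omega> \<le> I" using hit_down_le_iff[of X I \<omega> k] by auto
  show ?thesis
  proof (cases "j = k")
    case False
    then have "j < k" using j by auto
    have "hit_down X I \<omega> \<le> enat j" using hit_down_le_iff[of X I \<omega> j] j by auto
    with h \<open>j < k\<close> show ?thesis by auto
  qed (use j in auto)
qed

lemma telesc:
  fixes X :: "nat \<Rightarrow> 'a \<Rightarrow> real"
  assumes "\<And>i. i < k \<Longrightarrow> enat i < \<tau> \<omega>"
  shows "(\<Sum>i<k. indicator {x. enat i < \<tau> x} \<omega> * (X i \<omega> + R - X (Suc i) \<omega>)) = X 0 \<omega> - X k \<omega> + real k * R"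
proof -
  have "(\<Sum>i<k. indicator {x. enat i < \<tau> x} \<omega> * (X i \<omega> + R - X (Suc i) \<omega>))
      = (\<Sum>i<k. (X i \<omega> - X (Suc i) \<omega>) + R)"
    using assms by (intro sum.cong) auto
  also have "\<dots> = X 0 \<omega> - X k \<omega> + real k * R"
    by (simp add: sum.distrib sum_lessThan_telescope'[of "\<lambda>n. X n \<omega>"])
  finally show ?thesis .
qed

lemma opt:
  fixes a s D t :: real
  assumes a: "a > 0" and s: "s \<ge> 0" and D: "D \<ge> 0" and t: "t > 0"
  shows "\<exists>l\<ge>0. l * D < 3 \<and> - l * a + t * ((l\<^sup>2 * s / 2) / (1 - l * D / 3)) \<le> - ((a\<^sup>2 / 2) / (s * t + a * D / 3))"
proof (cases "s > 0")
  case True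
  define d where "d = s * t + a * D / 3"
  have st: "s * t > 0" using True t by simp
  have d: "d > 0" "d > a * D / 3" unfolding d_def using st a D by (auto intro: add_pos_nonneg)
  define l where "l = a / d"
  have l0: "l \<ge> 0" unfolding l_def using a d by simp
  have lD: "l * D / 3 < 1" unfolding l_def using d by (simp add: field_simps)
  have den: "1 - l * D / 3 = s * t / d" unfolding l_def d_def using d unfolding d_def by (simp add: field_simps)
  have "- l * a + t * ((l\<^sup>2 * s / 2) / (1 - l * D / 3)) = - ((a\<^sup>2 / 2) / d)"
    unfolding den unfolding l_def using d st t True by (simp add: field_simps power2_eq_square)
  then show ?thesis using l0 lD unfolding d_def by (intro exI[of _ l]) auto
next
  case False
  then have s0: "s = 0" using s by simp
  show ?thesis
  proof (cases "D > 0")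
    case True
    show ?thesis
      using True a s0 by (intro exI[of _ "3 / (2 * D)"]) (auto simp: field_simps power2_eq_square)
  next
    case False
    then have "D = 0" using D by simp
    then show ?thesis using s0 by (intro exI[of _ 0]) auto
  qed
qed

lemma tail_bound:
  fixes Z :: "nat \<Rightarrow> 'a \<Rightarrow> real"
  assumes M: "prob_space M" and filt: "filtration (space M) F" and sub: "\<And>t. subalgebra M (F t)"
  and Zmeas: "\<And>t. Z t \<in> borel_measurable (F (Suc t))"
  and Gmeas: "\<And>t. G t \<in> sets (F t)"
  and bern: "\<And>t. cond_bernstein M (F t) (Z t) D s"
  and D: "D \<ge> 0" and s: "s \<ge> 0" and a: "a > 0" and n: "n > 0"
  shows "measure M {\<omega> \<in> space M. a \<le> (\<Sum>i<n. indicator (G i) \<omega> * Z i \<omega>)}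
           \<le> exp (- ((a\<^sup>2 / 2) / (s * real n + a * D / 3)))"
proof -
  interpret prob_space M by fact
  obtain l where l: "l \<ge> 0" "l * D < 3"
    and lb: "- l * a + real n * ((l\<^sup>2 * s / 2) / (1 - l * D / 3)) \<le> - ((a\<^sup>2 / 2) / (s * real n + a * D / 3))"
    using opt[OF a s D, of "real n"] n by auto
  define psi where "psi = (l\<^sup>2 * s / 2) / (1 - l * D / 3)"
  have psi: "psi \<ge> 0" unfolding psi_def using l s by (intro divide_nonneg_pos) auto
  have AEb: "AE \<omega> in M. nn_cond_exp M (F t) (\<lambda>x. ennreal (exp (l * Z t x))) \<omega> \<le> ennreal (exp psi)" for t
    using bern[of t] l unfolding cond_bernstein_def psi_def by auto
  have mb: "(\<integral>\<^sup>+\<omega>. ennreal (exp (l * (\<Sum>i<n. indicator (G i) \<omega> * Z i \<omega>))) \<partial>M) \<le> ennreal (exp (real n * psi))"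
    by (rule moment_bound[OF M filt sub Zmeas Gmeas AEb psi])
  have ZM[measurable]: "Z i \<in> borel_measurable M" for i using measurable_from_subalg[OF sub Zmeas] .
  have GM[measurable]: "G i \<in> sets M" for i using sub[of i] Gmeas[of i] unfolding subalgebra_def by auto
  define S where "S \<omega> = (\<Sum>i<n. indicator (G i) \<omega> * Z i \<omega>)" for \<omega>
  have SM[measurable]: "S \<in> borel_measurable M" unfolding S_def by measurable
  have "emeasure M {\<omega> \<in> space M. a \<le> S \<omega>} = (\<integral>\<^sup>+\<omega>. indicator {\<omega> \<in> space M. a \<le> S \<omega>} \<omega> \<partial>M)"
    by (rule nn_integral_indicator[symmetric]) measurable
  also have "\<dots> \<le> (\<integral>\<^sup>+\<omega>. ennreal (exp (- l * a)) * ennreal (exp (l * S \<omega>)) \<partial>M)"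
  proof (rule nn_integral_mono)
    fix \<omega> assume "\<omega> \<in> space M"
    show "indicator {\<omega> \<in> space M. a \<le> S \<omega>} \<omega> \<le> ennreal (exp (- l * a)) * ennreal (exp (l * S \<omega>))"
    proof (cases "a \<le> S \<omega>")
      case True
      have "0 \<le> - l * a + l * S \<omega>" using mult_left_mono[OF True l(1)] by (simp add: algebra_simps)
      then have "1 \<le> exp (- l * a) * exp (l * S \<omega>)" by (simp add: exp_add[symmetric])
      then show ?thesis by (simp add: ennreal_mult''[symmetric] split: split_indicator)
    qed (auto split: split_indicator)
  qed
  also have "\<dots> = ennreal (exp (- l * a)) * (\<integral>\<^sup>+\<omega>. ennreal (exp (l * S \<omega>)) \<partial>M)"
    by (rule nn_integral_cmult) measurable
  also have "\<dots> \<le> ennreal (exp (- l * a)) * ennreal (exp (real n * psi))"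
    using mb unfolding S_def by (intro mult_left_mono) auto
  also have "\<dots> = ennreal (exp (- l * a + real n * psi))"
    by (simp add: ennreal_mult''[symmetric] exp_add[symmetric])
  also have "\<dots> \<le> ennreal (exp (- ((a\<^sup>2 / 2) / (s * real n + a * D / 3))))"
    using lb unfolding psi_def by (intro ennreal_leI) simp
  finally have "emeasure M {\<omega> \<in> space M. a \<le> S \<omega>} \<le> ennreal (exp (- ((a\<^sup>2 / 2) / (s * real n + a * D / 3))))" .
  then show ?thesis unfolding S_def emeasure_eq_measure by (simp add: ennreal_le_iff)
qed

lemma hd_meas:
  fixes X :: "nat \<Rightarrow> 'a \<Rightarrow> real"
  assumes filt: "filtration (space M) F" and adapted: "\<And>t. X t \<in> borel_measurable (F t)"
  shows "{\<omega> \<in> space M. enat i < hit_down X I \<omega>} \<in> sets (F i)"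
proof -
  have spF: "space (F i) = space M" using filt unfolding filtration_def by auto
  have Xm: "X j \<in> borel_measurable (F i)" if "j \<le> i" for j
  proof -
    have "subalgebra (F i) (F j)" using filt that unfolding subalgebra_def filtration_def by auto
    then show ?thesis using measurable_from_subalg adapted by blast
  qed
  have "{\<omega> \<in> space M. enat i < hit_down X I \<omega>} = (\<Inter>j\<in>{..i}. {\<omega> \<in> space (F i). I < X j \<omega>}) \<inter> space (F i)"
    using spF by (auto simp: hit_down_less_iff)
  also have "\<dots> \<in> sets (F i)"
  proof (intro sets.Int sets.finite_INT)
    fix j assume "j \<in> {..i}"
    then have [measurable]: "X j \<in> borel_measurable (F i)" using Xm by auto
    show "{\<omega> \<in> space (F i). I < X j \<omega>} \<in> sets (F i)" by measurable
  qed auto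
  finally show ?thesis .
qed

lemma hu_meas:
  fixes X :: "nat \<Rightarrow> 'a \<Rightarrow> real"
  assumes filt: "filtration (space M) F" and adapted: "\<And>t. X t \<in> borel_measurable (F t)"
  shows "{\<omega> \<in> space M. enat i < hit_up X I \<omega>} \<in> sets (F i)"
proof -
  have spF: "space (F i) = space M" using filt unfolding filtration_def by auto
  have Xm: "X j \<in> borel_measurable (F i)" if "j \<le> i" for j
  proof -
    have "subalgebra (F i) (F j)" using filt that unfolding subalgebra_def filtration_def by auto
    then show ?thesis using measurable_from_subalg adapted by blast
  qed
  have "{\<omega> \<in> space M. enat i < hit_up X I \<omega>} = (\<Inter>j\<in>{..i}. {\<omega> \<in> space (F i). X j \<omega> < I}) \<inter> space (F i)"
    using spF by (auto simp: hit_up_less_iff)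
  also have "\<dots> \<in> sets (F i)"
  proof (intro sets.Int sets.finite_INT)
    fix j assume "j \<in> {..i}"
    then have [measurable]: "X j \<in> borel_measurable (F i)" using Xm by auto
    show "{\<omega> \<in> space (F i). X j \<omega> < I} \<in> sets (F i)" by measurable
  qed auto
  finally show ?thesis .
qed

lemma st_meas:
  assumes filt: "filtration (space M) F" and stop: "nat_stopping_time F \<tau>s"
  shows "{\<omega> \<in> space M. enat i < \<tau>s \<omega>} \<in> sets (F i)"
proof -
  have spF: "space (F i) = space M" using filt unfolding filtration_def by auto
  have "{\<omega> \<in> space (F i). \<tau>s \<omega> \<le> enat i} \<in> sets (F i)"
    using stop unfolding nat_stopping_time_def pred_def by auto
  then have "space (F i) - {\<omega> \<in> space (F i). \<tau>s \<omega> \<le> enat i} \<in> sets (F i)" by (rule sets.compl_sets)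
  also have "space (F i) - {\<omega> \<in> space (F i). \<tau>s \<omega> \<le> enat i} = {\<omega> \<in> space M. enat i < \<tau>s \<omega>}"
    using spF by auto
  finally show ?thesis .
qed

lemma Zmeas_gen:
  fixes X :: "nat \<Rightarrow> 'a \<Rightarrow> real"
  assumes filt: "filtration (space M) F" and sub: "\<And>t. subalgebra M (F t)"
    and adapted: "\<And>t. X t \<in> borel_measurable (F t)"
    and taus: "\<And>i. {\<omega> \<in> space M. enat i < \<tau> \<omega>} \<in> sets (F i)"
  shows "(\<lambda>\<omega>. indicator {x. enat t < \<tau> x} \<omega> * (X t \<omega> + R - X (Suc t) \<omega>)) \<in> borel_measurable (F (Suc t))"
proof -
  have subFF: "subalgebra (F j) (F i)" if "i \<le> j" for i j
    using filt that unfolding subalgebra_def filtration_def by auto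
  have spF: "space (F i) = space M" for i using filt unfolding filtration_def by auto
  have Xt[measurable]: "X t \<in> borel_measurable (F (Suc t))" using measurable_from_subalg[OF subFF adapted] by auto
  have Xs[measurable]: "X (Suc t) \<in> borel_measurable (F (Suc t))" by (rule adapted)
  have St[measurable]: "{\<omega> \<in> space M. enat t < \<tau> \<omega>} \<in> sets (F (Suc t))"
    using subFF[of t "Suc t"] taus[of t] unfolding subalgebra_def by auto
  have "(\<lambda>\<omega>. indicator {\<omega> \<in> space M. enat t < \<tau> \<omega>} \<omega> * (X t \<omega> + R - X (Suc t) \<omega>)) \<in> borel_measurable (F (Suc t))"
    by measurable
  then show ?thesis
    by (rule measurable_cong[THEN iffD1, rotated]) (auto simp: spF split: split_indicator)
qed

lemma sum_G:
  fixes X :: "nat \<Rightarrow> 'a \<Rightarrow> real"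
  assumes hk: "hit_down X I \<omega> = enat k" and kT: "k \<le> T" and \<omega>: "\<omega> \<in> space M"
    and act: "\<And>i. i < k \<Longrightarrow> enat i < \<tau> \<omega>"
  shows "(\<Sum>i<T. indicator {\<omega> \<in> space M. enat i < hit_down X I \<omega>} \<omega> *
            (indicator {x. enat i < \<tau> x} \<omega> * (X i \<omega> + R - X (Suc i) \<omega>))) = X 0 \<omega> - X k \<omega> + real k * R"
proof -
  have "(\<Sum>i<T. indicator {\<omega> \<in> space M. enat i < hit_down X I \<omega>} \<omega> *
            (indicator {x. enat i < \<tau> x} \<omega> * (X i \<omega> + R - X (Suc i) \<omega>)))
      = (\<Sum>i<k. indicator {x. enat i < \<tau> x} \<omega> * (X i \<omega> + R - X (Suc i) \<omega>))"
    by (rule sum.mono_neutral_cong_right) (use kT hk \<omega> in \<open>auto split: split_indicator\<close>)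
  also have "\<dots> = X 0 \<omega> - X k \<omega> + real k * R" by (rule telesc) (rule act)
  finally show ?thesis .
qed

theorem mainTheorem19:
  fixes M :: "'a measure" and F :: "nat \<Rightarrow> 'a measure" and X :: "nat \<Rightarrow> 'a \<Rightarrow> real"
    and \<tau>s :: "'a \<Rightarrow> enat"
    and x0 Im Ip D s R \<epsilon> :: real
  assumes M: "prob_space M"
    and filt: "filtration (space M) F"
    and sub: "\<And>t. subalgebra M (F t)"
    and adapted: "\<And>t. X t \<in> borel_measurable (F t)"
    and integ: "\<And>t. integrable M (X t)"
    and X0: "\<And>\<omega>. \<omega> \<in> space M \<Longrightarrow> X 0 \<omega> = x0"
    and stop: "nat_stopping_time F \<tau>s"
    and I: "Im < Ip"
    and D: "D \<ge> 0" and s: "s \<ge> 0"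
    and eps: "\<epsilon> > 0"
  shows
    "(drift_conditions M F X \<tau>s R D s \<and> R < 0 \<and> x0 > Im \<longrightarrow>
       (\<forall>T::nat. T > 0 \<and> real T \<le> (1 - \<epsilon>) * (x0 - Im) / (- R) \<longrightarrow>
          measure M {\<omega> \<in> space M. hit_down X Im \<omega> \<le> min (enat T) (\<tau>s \<omega>)}
            \<le> exp (- ((\<epsilon>\<^sup>2 * (x0 - Im)\<^sup>2 / 2) / (s * real T + \<epsilon> * (x0 - Im) * D / 3)))))
     \<and>
     (drift_conditions M F X (\<lambda>\<omega>. min (min (hit_up X Ip \<omega>) (hit_down X Im \<omega>)) (\<tau>s \<omega>)) R D s
        \<and> R > 0 \<and> Im < x0 \<and> x0 < Ip \<longrightarrow>
       (\<forall>T::nat. T > 0 \<and> real T \<ge> (1 + \<epsilon>) * (Ip - x0) / R \<longrightarrow>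
          (let B = exp (- (((x0 - Im)\<^sup>2 / 2) / (s * real T + (x0 - Im) * D / 3)))
                 + exp (- ((\<epsilon>\<^sup>2 * (Ip - x0)\<^sup>2 / 2) / (s * real T + \<epsilon> * (Ip - x0) * D / 3)))
           in measure M {\<omega> \<in> space M. hit_up X Ip \<omega> > enat T \<and> \<tau>s \<omega> > enat T} \<le> B
            \<and> measure M {\<omega> \<in> space M. hit_up X Ip \<omega> > hit_down X Im \<omega> \<and> \<tau>s \<omega> > enat T} \<le> B)))"
proof -
  interpret prob_space M by fact
  have subFF: "subalgebra (F j) (F i)" if "i \<le> j" for i j
    using filt that unfolding subalgebra_def filtration_def by auto
  have spF: "space (F i) = space M" for i using filt unfolding filtration_def by auto
  have Xm: "X j \<in> borel_measurable (F i)" if "j \<le> i" for i j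
    using measurable_from_subalg[OF subFF adapted] that by auto
  have hd: "{\<omega> \<in> space M. enat i < hit_down X I \<omega>} \<in> sets (F i)" for I i
    by (rule hd_meas[OF filt adapted])
  have hu: "{\<omega> \<in> space M. enat i < hit_up X I \<omega>} \<in> sets (F i)" for I i
    by (rule hu_meas[OF filt adapted])
  have st: "{\<omega> \<in> space M. enat i < \<tau>s \<omega>} \<in> sets (F i)" for i
    by (rule st_meas[OF filt stop])
  have topF: "space M \<in> sets (F t)" for t using sets.top[of "F t"] spF[of t] by simp
  have setsM: "A \<in> sets (F i) \<Longrightarrow> A \<in> sets M" for A i using sub[of i] unfolding subalgebra_def by auto
  show ?thesis
  proof (intro conjI impI allI)
    fix T :: nat
    assume dc: "drift_conditions M F X \<tau>s R D s \<and> R < 0 \<and> x0 > Im"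
      and T: "T > 0 \<and> real T \<le> (1 - \<epsilon>) * (x0 - Im) / (- R)"
    have R: "R < 0" and x0: "x0 > Im" using dc by auto
    define Z where "Z t \<omega> = indicator {x. enat t < \<tau>s x} \<omega> * (X t \<omega> + R - X (Suc t) \<omega>)" for t \<omega>
    define G where "G t = {\<omega> \<in> space M. enat t < hit_down X Im \<omega>}" for t
    have mR: "- R > 0" using R by simp
    have TR: "real T * (- R) \<le> (1 - \<epsilon>) * (x0 - Im)" using T pos_le_divide_eq[OF mR] by blast
    define a where "a = \<epsilon> * (x0 - Im)"
    have a: "a > 0" unfolding a_def using eps x0 by simp
    have tb: "measure M {\<omega> \<in> space M. a \<le> (\<Sum>i<T. indicator (G i) \<omega> * Z i \<omega>)}
           \<le> exp (- ((a\<^sup>2 / 2) / (s * real T + a * D / 3)))"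
    proof (rule tail_bound[OF M filt sub _ _ _ D s a])
      show "Z t \<in> borel_measurable (F (Suc t))" for t
        unfolding Z_def by (rule Zmeas_gen[OF filt sub adapted st])
      show "G t \<in> sets (F t)" for t unfolding G_def by (rule hd)
      show "cond_bernstein M (F t) (Z t) D s" for t
        using dc unfolding drift_conditions_def Z_def by auto
    qed (use T in auto)
    have sub1: "{\<omega> \<in> space M. hit_down X Im \<omega> \<le> min (enat T) (\<tau>s \<omega>)}
        \<subseteq> {\<omega> \<in> space M. a \<le> (\<Sum>i<T. indicator (G i) \<omega> * Z i \<omega>)}"
    proof safe
      fix \<omega> assume \<omega>: "\<omega> \<in> space M" and h: "hit_down X Im \<omega> \<le> min (enat T) (\<tau>s \<omega>)"
      have hT: "hit_down X Im \<omega> \<le> enat T" and hs: "hit_down X Im \<omega> \<le> \<tau>s \<omega>" using h by auto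
      obtain k where k0: "hit_down X Im \<omega> = enat k" using hT by (cases "hit_down X Im \<omega>") auto
      have k: "hit_down X Im \<omega> = enat k" "k \<le> T" using k0 hT by auto
      have act: "enat i < \<tau>s \<omega>" if "i < k" for i
      proof -
        have "enat i < enat k" using that by simp
        then show ?thesis using hs k0 by (metis order.strict_trans2)
      qed
      have "(\<Sum>i<T. indicator (G i) \<omega> * Z i \<omega>) = X 0 \<omega> - X k \<omega> + real k * R"
        unfolding G_def Z_def by (rule sum_G[where \<tau>=\<tau>s, OF k \<omega> act])
      moreover have "X k \<omega> \<le> Im" by (rule hit_down_eq[OF k(1)])
      moreover have "real k * R \<ge> real T * R" using k R by (simp add: mult_right_mono_neg)
      ultimately show "a \<le> (\<Sum>i<T. indicator (G i) \<omega> * Z i \<omega>)"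
        using X0[OF \<omega>] TR unfolding a_def by (simp add: algebra_simps)
    qed
    have Em: "{\<omega> \<in> space M. a \<le> (\<Sum>i<T. indicator (G i) \<omega> * Z i \<omega>)} \<in> sets M"
    proof -
      have [measurable]: "Z i \<in> borel_measurable M" for i
        using measurable_from_subalg[OF sub Zmeas_gen[OF filt sub adapted st]] unfolding Z_def by blast
      have [measurable]: "G i \<in> sets M" for i unfolding G_def using setsM[OF hd] .
      show ?thesis by measurable
    qed
    have "a\<^sup>2 = \<epsilon>\<^sup>2 * (x0 - Im)\<^sup>2" unfolding a_def by (simp add: power_mult_distrib)
    then show "measure M {\<omega> \<in> space M. hit_down X Im \<omega> \<le> min (enat T) (\<tau>s \<omega>)}
            \<le> exp (- ((\<epsilon>\<^sup>2 * (x0 - Im)\<^sup>2 / 2) / (s * real T + \<epsilon> * (x0 - Im) * D / 3)))"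
      using order_trans[OF finite_measure_mono[OF sub1 Em] tb] unfolding a_def by (simp add: mult.assoc)
  next
    fix T :: nat
    assume dc: "drift_conditions M F X (\<lambda>\<omega>. min (min (hit_up X Ip \<omega>) (hit_down X Im \<omega>)) (\<tau>s \<omega>)) R D s
        \<and> R > 0 \<and> Im < x0 \<and> x0 < Ip"
      and T: "T > 0 \<and> real T \<ge> (1 + \<epsilon>) * (Ip - x0) / R"
    have R: "R > 0" and x0: "Im < x0" "x0 < Ip" using dc by auto
    define \<tau> where "\<tau> = (\<lambda>\<omega>. min (min (hit_up X Ip \<omega>) (hit_down X Im \<omega>)) (\<tau>s \<omega>))"
    have tau_less: "enat i < \<tau> \<omega> \<longleftrightarrow> enat i < hit_up X Ip \<omega> \<and> enat i < hit_down X Im \<omega> \<and> enat i < \<tau>s \<omega>" for i \<omega>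
      unfolding \<tau>_def by auto
    have taus: "{\<omega> \<in> space M. enat i < \<tau> \<omega>} \<in> sets (F i)" for i
    proof -
      have "{\<omega> \<in> space M. enat i < \<tau> \<omega>} = {\<omega> \<in> space M. enat i < hit_up X Ip \<omega>} \<inter> {\<omega> \<in> space M. enat i < hit_down X Im \<omega>} \<inter> {\<omega> \<in> space M. enat i < \<tau>s \<omega>}"
        using tau_less by auto
      moreover have "{\<omega> \<in> space M. enat i < hit_up X Ip \<omega>} \<inter> {\<omega> \<in> space M. enat i < hit_down X Im \<omega>} \<inter> {\<omega> \<in> space M. enat i < \<tau>s \<omega>} \<in> sets (F i)"
        by (intro sets.Int hu hd st)
      ultimately show ?thesis by simp
    qed
    define Z where "Z t \<omega> = indicator {x. enat t < \<tau> x} \<omega> * (X t \<omega> + R - X (Suc t) \<omega>)" for t \<omega>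
    define G1 where "G1 t = {\<omega> \<in> space M. enat t < hit_down X Im \<omega>}" for t
    define G2 where "G2 t = space M" for t :: nat
    have TR: "(1 + \<epsilon>) * (Ip - x0) \<le> real T * R" using T pos_divide_le_eq[OF R] by blast
    define a1 where "a1 = x0 - Im"
    define a2 where "a2 = \<epsilon> * (Ip - x0)"
    have a1: "a1 > 0" unfolding a1_def using x0 by simp
    have a2: "a2 > 0" unfolding a2_def using x0 eps by simp
    have Zm: "Z t \<in> borel_measurable (F (Suc t))" for t
      unfolding Z_def by (rule Zmeas_gen[OF filt sub adapted taus])
    have bern: "cond_bernstein M (F t) (Z t) D s" for t
      using dc unfolding drift_conditions_def Z_def \<tau>_def by auto
    define E1 where "E1 = {\<omega> \<in> space M. a1 \<le> (\<Sum>i<T. indicator (G1 i) \<omega> * Z i \<omega>)}"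
    define E2 where "E2 = {\<omega> \<in> space M. a2 \<le> (\<Sum>i<T. indicator (G2 i) \<omega> * Z i \<omega>)}"
    have tb1: "measure M E1 \<le> exp (- ((a1\<^sup>2 / 2) / (s * real T + a1 * D / 3)))"
      unfolding E1_def
      by (rule tail_bound[OF M filt sub Zm _ bern D s a1]) (use T hd in \<open>auto simp: G1_def\<close>)
    have tb2: "measure M E2 \<le> exp (- ((a2\<^sup>2 / 2) / (s * real T + a2 * D / 3)))"
      unfolding E2_def
      by (rule tail_bound[OF M filt sub Zm _ bern D s a2]) (use T topF in \<open>auto simp: G2_def\<close>)
    have ZM[measurable]: "Z i \<in> borel_measurable M" for i
      using measurable_from_subalg[OF sub Zm] .
    have [measurable]: "G1 i \<in> sets M" for i unfolding G1_def using setsM[OF hd] .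
    have [measurable]: "G2 i \<in> sets M" for i unfolding G2_def by simp
    have E1m: "E1 \<in> sets M" unfolding E1_def by measurable
    have E2m: "E2 \<in> sets M" unfolding E2_def by measurable
    have sumE: "measure M (E1 \<union> E2) \<le> exp (- (((x0 - Im)\<^sup>2 / 2) / (s * real T + (x0 - Im) * D / 3)))
                 + exp (- ((\<epsilon>\<^sup>2 * (Ip - x0)\<^sup>2 / 2) / (s * real T + \<epsilon> * (Ip - x0) * D / 3)))"
    proof -
      have "a2\<^sup>2 = \<epsilon>\<^sup>2 * (Ip - x0)\<^sup>2" unfolding a2_def by (simp add: power_mult_distrib)
      then have tb2': "measure M E2 \<le> exp (- ((\<epsilon>\<^sup>2 * (Ip - x0)\<^sup>2 / 2) / (s * real T + \<epsilon> * (Ip - x0) * D / 3)))"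
        using tb2 unfolding a2_def by (simp add: mult.assoc)
      have "measure M (E1 \<union> E2) \<le> measure M E1 + measure M E2"
        by (rule measure_subadditive[OF E1m E2m]) auto
      then show ?thesis using tb1 tb2' unfolding a1_def by linarith
    qed
    have inE1: "\<omega> \<in> E1" if \<omega>: "\<omega> \<in> space M" and k: "hit_down X Im \<omega> = enat k" "k \<le> T"
      and act: "\<And>i. i < k \<Longrightarrow> enat i < \<tau> \<omega>" for \<omega> k
    proof -
      have "(\<Sum>i<T. indicator (G1 i) \<omega> * Z i \<omega>) = X 0 \<omega> - X k \<omega> + real k * R"
        unfolding G1_def Z_def by (rule sum_G[where \<tau>=\<tau>, OF k \<omega> act])
      moreover have "X k \<omega> \<le> Im" by (rule hit_down_eq[OF k(1)])
      moreover have "real k * R \<ge> 0" using R by simp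
      ultimately show ?thesis using X0[OF \<omega>] \<omega> unfolding E1_def a1_def by simp
    qed
    have inE2: "\<omega> \<in> E2" if \<omega>: "\<omega> \<in> space M" and act: "\<And>i. i < T \<Longrightarrow> enat i < \<tau> \<omega>"
      and XT: "X T \<omega> < Ip" for \<omega>
    proof -
      have "(\<Sum>i<T. indicator (G2 i) \<omega> * Z i \<omega>) = (\<Sum>i<T. indicator {x. enat i < \<tau> x} \<omega> * (X i \<omega> + R - X (Suc i) \<omega>))"
        unfolding G2_def Z_def using \<omega> by simp
      also have "\<dots> = X 0 \<omega> - X T \<omega> + real T * R" by (rule telesc) (rule act)
      finally show ?thesis using X0[OF \<omega>] \<omega> XT TR unfolding E2_def a2_def by (simp add: algebra_simps)
    qed
    have A1: "{\<omega> \<in> space M. hit_up X Ip \<omega> > enat T \<and> \<tau>s \<omega> > enat T} \<subseteq> E1 \<union> E2"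
    proof safe
      fix \<omega> assume \<omega>: "\<omega> \<in> space M" and hu: "hit_up X Ip \<omega> > enat T" and ht: "\<tau>s \<omega> > enat T"
        and nE2: "\<omega> \<notin> E2"
      show "\<omega> \<in> E1"
      proof (cases "hit_down X Im \<omega> \<le> enat T")
        case True
        obtain k where k0: "hit_down X Im \<omega> = enat k" using True by (cases "hit_down X Im \<omega>") auto
        have k: "hit_down X Im \<omega> = enat k" "k \<le> T" using k0 True by auto
        show ?thesis
        proof (rule inE1[OF \<omega> k])
          fix i assume ik: "i < k"
          have iT: "enat i < enat T" using ik k by simp
          have 1: "enat i < hit_up X Ip \<omega>" using iT hu by (rule order.strict_trans)
          have 2: "enat i < hit_down X Im \<omega>" using ik k0 by simp
          have 3: "enat i < \<tau>s \<omega>" using iT ht by (rule order.strict_trans)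
          show "enat i < \<tau> \<omega>" unfolding tau_less using 1 2 3 by simp
        qed
      next
        case False
        then have hdT: "enat T < hit_down X Im \<omega>" by simp
        have "\<omega> \<in> E2"
        proof (rule inE2[OF \<omega>])
          fix i assume "i < T"
          then have iT: "enat i < enat T" by simp
          have 1: "enat i < hit_up X Ip \<omega>" using iT hu by (rule order.strict_trans)
          have 2: "enat i < hit_down X Im \<omega>" using iT hdT by (rule order.strict_trans)
          have 3: "enat i < \<tau>s \<omega>" using iT ht by (rule order.strict_trans)
          show "enat i < \<tau> \<omega>" unfolding tau_less using 1 2 3 by simp
        next
          show "X T \<omega> < Ip" using hu by (simp add: hit_up_less_iff)
        qed
        with nE2 show ?thesis by simp
      qed
    qed
    have A2: "{\<omega> \<in> space M. hit_up X Ip \<omega> > hit_down X Im \<omega> \<and> \<tau>s \<omega> > enat T} \<subseteq> E1 \<union> E2"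
    proof safe
      fix \<omega> assume \<omega>: "\<omega> \<in> space M" and hu: "hit_up X Ip \<omega> > hit_down X Im \<omega>" and ht: "\<tau>s \<omega> > enat T"
        and nE2: "\<omega> \<notin> E2"
      obtain k where k: "hit_down X Im \<omega> = enat k" using hu by (cases "hit_down X Im \<omega>") auto
      have ku: "enat k < hit_up X Ip \<omega>" using hu k by simp
      show "\<omega> \<in> E1"
      proof (cases "k \<le> T")
        case True
        show ?thesis
        proof (rule inE1[OF \<omega> k True])
          fix i assume ik: "i < k"
          have ik': "enat i < enat k" using ik by simp
          have iT: "enat i < enat T" using ik True by simp
          have 1: "enat i < hit_up X Ip \<omega>" using ik' ku by (rule order.strict_trans)
          have 2: "enat i < hit_down X Im \<omega>" using ik' k by simp
          have 3: "enat i < \<tau>s \<omega>" using iT ht by (rule order.strict_trans)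
          show "enat i < \<tau> \<omega>" unfolding tau_less using 1 2 3 by simp
        qed
      next
        case False
        have Tk: "enat T < enat k" using False by simp
        have Tu: "enat T < hit_up X Ip \<omega>" using Tk ku by (rule order.strict_trans)
        have "\<omega> \<in> E2"
        proof (rule inE2[OF \<omega>])
          fix i assume "i < T"
          then have iT: "enat i < enat T" by simp
          have 1: "enat i < hit_up X Ip \<omega>" using iT Tu by (rule order.strict_trans)
          have 2: "enat i < hit_down X Im \<omega>" using iT Tk k by simp
          have 3: "enat i < \<tau>s \<omega>" using iT ht by (rule order.strict_trans)
          show "enat i < \<tau> \<omega>" unfolding tau_less using 1 2 3 by simp
        next
          show "X T \<omega> < Ip" using Tu by (simp add: hit_up_less_iff)
        qed
        with nE2 show ?thesis by simp
      qed
    qed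
    have E12: "E1 \<union> E2 \<in> sets M" using E1m E2m by simp
    show "let B = exp (- (((x0 - Im)\<^sup>2 / 2) / (s * real T + (x0 - Im) * D / 3)))
                 + exp (- ((\<epsilon>\<^sup>2 * (Ip - x0)\<^sup>2 / 2) / (s * real T + \<epsilon> * (Ip - x0) * D / 3)))
           in measure M {\<omega> \<in> space M. hit_up X Ip \<omega> > enat T \<and> \<tau>s \<omega> > enat T} \<le> B
            \<and> measure M {\<omega> \<in> space M. hit_up X Ip \<omega> > hit_down X Im \<omega> \<and> \<tau>s \<omega> > enat T} \<le> B"
      unfolding Let_def
      using order_trans[OF finite_measure_mono[OF A1 E12] sumE]
        order_trans[OF finite_measure_mono[OF A2 E12] sumE] by simp
  qed
qed

end
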